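(* A nonzero tensor $A\in\mathrm{Sym}^d(\mathbb{R}^n)$ is critical in $\mathrm{Sym}^d(\mathbb{R}^n)$ if and only if there exist $r\in\mathbb{N}$, symmetric best rank-one approximations $Y_1,\dots,Y_r$ of $A$, and coefficients $\alpha_1,\dots,\alpha_r>0$ with $\sum_\ell\alpha_\ell=1$, such that \[ \Big(\frac{\|A\|_2}{\|A\|_F}\Big)^2A=\sum_{\ell=1}^r\alpha_\ell Y_\ell. \] In this case $A$ is also critical in the full space $\otimes_{j=1}^d\mathbb{R}^n$.
   Context: Tensors and norms: \begin{itemize} \item $\mathrm{Sym}^d(\mathbb{R}^n)$ is the space of real $n^d$-tensors invariant under permutation of indices. \item The Frobenius inner product is $\langle A,A'\rangle_F=\sum a_{i_1\dots i_d}a'_{i_1\dots i_d}$, with norm $\|\cdot\|_F$. \item The spectral norm is $\|A\|_2=\max_{\|x^{(j)}\|=1}\langle A,x^{(1)}\otimes\cdots\otimes x^{(d)}\rangle_F$. \end{itemize} A best rank-one approximation of $A$ is a rank-one tensor $Y$ minimizing $\|A-X\|_F$ over all rank-one tensors $X$. It is symmetric if it has the form $\lambda\,y\otimes\cdots\otimes y$. Generalized gradient (Clarke): for a Lipschitz function $f$ on a Euclidean space, the generalized gradient $\partial f(p)$ is the convex hull of all limits of gradients $\nabla f(p_i)$, taken over sequences $p_i\to p$ of differentiability points. Criticality: \begin{itemize} \item A nonzero $A\in\mathrm{Sym}^d(\mathbb{R}^n)$ is critical in $\mathrm{Sym}^d(\mathbb{R}^n)$ if $\lambda A\in\partial g(A/\|A\|_F)$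 for some $\lambda\in\mathbb{R}$, where $g$ is the spectral norm regarded as a function on the Euclidean space $(\mathrm{Sym}^d(\mathbb{R}^n),\langle\cdot,\cdot\rangle_F)$. \item $A$ is critical in $\otimes_{j=1}^d\mathbb{R}^n$ if the same holds with the spectral norm regarded as a function on the full tensor space. \end{itemize} *)

theory Defs
  imports "HOL-Analysis.Analysis"
begin

text \<open>Tensors of order d = CARD('d) on R^n with n = CARD('n) are vectors indexed by
  multi-indices i :: 'd \<Rightarrow> 'n. The Euclidean inner product on real ^ ('d \<Rightarrow> 'n)
  is exactly the Frobenius inner product.\<close>

type_synonym ('d, 'n) tensor = "real ^ ('d \<Rightarrow> 'n)"

definition sym_tensors :: "('d::finite, 'n::finite) tensor set" where
  "sym_tensors = {A. \<forall>\<sigma>::'d \<Rightarrow> 'd. bij \<sigma> \<longrightarrow> (\<forall>i. A $ (i \<circ> \<sigma>) = A $ i)}"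

definition outer :: "('d::finite \<Rightarrow> real ^ 'n::finite) \<Rightarrow> ('d, 'n) tensor" where
  "outer x = (\<chi> i. \<Prod>j\<in>UNIV. x j $ i j)"

definition spectral_norm :: "('d::finite, 'n::finite) tensor \<Rightarrow> real" where
  "spectral_norm A = Sup {A \<bullet> outer x | x. \<forall>j. norm (x j) = 1}"

definition rank_one :: "('d::finite, 'n::finite) tensor \<Rightarrow> bool" where
  "rank_one X \<longleftrightarrow> X \<noteq> 0 \<and> (\<exists>x. X = outer x)"

definition best_rank_one_approx :: "('d::finite, 'n::finite) tensor \<Rightarrow> ('d, 'n) tensor \<Rightarrow> bool" where
  "best_rank_one_approx A Y \<longleftrightarrow> rank_one Y \<and> (\<forall>X. rank_one X \<longrightarrow> norm (A - Y) \<le> norm (A - X))"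

definition sym_rank_one_form :: "('d::finite, 'n::finite) tensor \<Rightarrow> bool" where
  "sym_rank_one_form Y \<longleftrightarrow> (\<exists>(c::real) (y::real ^ 'n). Y = c *\<^sub>R outer (\<lambda>_. y))"

text \<open>Clarke generalized gradient of f regarded as a function on the Euclidean space S
  (a linear subspace of the ambient space, with the induced inner product): convex hull of
  all limits of gradients (elements of S) at differentiability points in S converging to p.\<close>
definition clarke_grad :: "'a::euclidean_space set \<Rightarrow> ('a \<Rightarrow> real) \<Rightarrow> 'a \<Rightarrow> 'a set" where
  "clarke_grad S f p = convex hull
     {v. \<exists>ps vs. (\<forall>k. ps k \<in> S \<and> vs k \<in> S \<and>
                     (f has_derivative (\<lambda>h. vs k \<bullet> h)) (at (ps k) within S))
               \<and> ps \<longlonglongrightarrow> p \<and> vs \<longlonglongrightarrow> v}"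

definition critical_in_sym :: "('d::finite, 'n::finite) tensor \<Rightarrow> bool" where
  "critical_in_sym A \<longleftrightarrow> A \<in> sym_tensors \<and> A \<noteq> 0 \<and>
     (\<exists>c::real. c *\<^sub>R A \<in> clarke_grad sym_tensors spectral_norm (A /\<^sub>R norm A))"

definition critical_in_full :: "('d::finite, 'n::finite) tensor \<Rightarrow> bool" where
  "critical_in_full A \<longleftrightarrow> A \<noteq> 0 \<and>
     (\<exists>c::real. c *\<^sub>R A \<in> clarke_grad UNIV spectral_norm (A /\<^sub>R norm A))"

end

theory Submission
  imports Defs
begin


abbreviation "unitfam x \<equiv> (\<forall>j. norm (x j) = 1)"

lemma outer_inner: "outer x \<bullet> outer z = (\<Prod>j\<in>UNIV. x j \<bullet> z j)"
proof -
  have "outer x \<bullet> outer z = (\<Sum>i\<in>UNIV. (\<Prod>j\<in>UNIV. x j $ i j) * (\<Prod>j\<in>UNIV. z j $ i j))"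
    by (simp add: outer_def inner_vec_def)
  also have "\<dots> = (\<Sum>i\<in>UNIV. \<Prod>j\<in>UNIV. x j $ i j * z j $ i j)"
    by (simp add: prod.distrib)
  also have "\<dots> = (\<Prod>j\<in>UNIV. \<Sum>k\<in>UNIV. x j $ k * z j $ k)"
    using prod_sum_PiE[of UNIV "\<lambda>_. UNIV" "\<lambda>j k. x j $ k * z j $ k"] by simp
  also have "\<dots> = (\<Prod>j\<in>UNIV. x j \<bullet> z j)"
    by (simp add: inner_vec_def)
  finally show ?thesis .
qed

lemma norm_outer: "norm (outer x) = (\<Prod>j\<in>UNIV. norm (x j))"
proof -
  have "norm (outer x) ^ 2 = (\<Prod>j\<in>UNIV. norm (x j) ^ 2)"
    by (simp add: power2_norm_eq_inner outer_inner)
  also have "\<dots> = (\<Prod>j\<in>UNIV. norm (x j)) ^ 2" by (simp add: prod_power_distrib)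
  finally show ?thesis
    by (metis norm_ge_zero power2_eq_iff_nonneg prod_nonneg)
qed

lemma norm_outer_unit: "unitfam x \<Longrightarrow> norm (outer x) = 1"
  by (simp add: norm_outer)

lemma outer_scale_slot: "outer (x(j := c *\<^sub>R x j)) = c *\<^sub>R outer x"
proof -
  have "\<And>i. (\<Prod>k\<in>UNIV. (x(j := c *\<^sub>R x j)) k $ i k) = c * (\<Prod>k\<in>UNIV. x k $ i k)"
  proof -
    fix i :: "'a \<Rightarrow> 'b"
    have "(\<Prod>k\<in>UNIV. (x(j := c *\<^sub>R x j)) k $ i k) = (\<Prod>k\<in>UNIV. (if k = j then c else 1) * x k $ i k)"
      by (rule prod.cong) auto
    also have "\<dots> = (\<Prod>k\<in>UNIV. (if k = j then c else 1)) * (\<Prod>k\<in>UNIV. x k $ i k)"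
      by (simp add: prod.distrib)
    also have "(\<Prod>k\<in>UNIV. (if k = j then c else 1)) = c"
      by (simp add: prod.delta)
    finally show "?thesis i" .
  qed
  then show ?thesis by (simp add: outer_def vec_eq_iff)
qed

lemma outer_scale_all: "outer (\<lambda>j. c j *\<^sub>R x j) = (\<Prod>j\<in>UNIV. c j) *\<^sub>R outer x"
  by (simp add: outer_def vec_eq_iff prod.distrib)

lemma outer_zero: "x j = 0 \<Longrightarrow> outer x = 0"
proof -
  assume "x j = 0"
  then have "\<And>i. (\<Prod>k\<in>UNIV. x k $ i k) = 0"
    by (intro prod_zero) (auto intro!: exI[of _ j])
  then show ?thesis by (simp add: outer_def vec_eq_iff)
qed



lemma exists_unitfam: "\<exists>x::'d \<Rightarrow> real^'n::finite. unitfam x"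
  by (rule exI[of _ "\<lambda>_. axis undefined 1"]) (simp add: norm_axis_1)

lemma sn_set_nonempty: "{A \<bullet> outer x | x. unitfam x} \<noteq> {}"
proof -
  obtain x :: "'a \<Rightarrow> real^'b" where "unitfam x" using exists_unitfam by auto
  then show ?thesis by auto
qed

lemma sn_le_norm_elem: "unitfam x \<Longrightarrow> A \<bullet> outer x \<le> norm A"
  using norm_cauchy_schwarz[of A "outer x"] by (simp add: norm_outer_unit)

lemma sn_bdd: "bdd_above {A \<bullet> outer x | x. unitfam x}"
  by (rule bdd_aboveI[of _ "norm A"]) (auto intro: sn_le_norm_elem)

lemma sn_upper: "unitfam x \<Longrightarrow> A \<bullet> outer x \<le> spectral_norm A"
  unfolding spectral_norm_def by (rule cSup_upper[OF _ sn_bdd]) auto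

lemma sn_least: "(\<And>x. unitfam x \<Longrightarrow> A \<bullet> outer x \<le> M) \<Longrightarrow> spectral_norm A \<le> M"
  unfolding spectral_norm_def by (rule cSup_least[OF sn_set_nonempty]) auto

lemma sn_le_norm: "spectral_norm A \<le> norm A"
  by (rule sn_least) (rule sn_le_norm_elem)

lemma outer_neg_slot: "outer (x(j := - x j)) = - outer x"
  using outer_scale_slot[of x j "-1"] by simp

lemma sn_neg: "unitfam x \<Longrightarrow> - (A \<bullet> outer x) \<le> spectral_norm A"
proof -
  assume u: "unitfam x"
  let ?x = "x(undefined := - x undefined)"
  have "unitfam ?x" using u by simp
  then have "A \<bullet> outer ?x \<le> spectral_norm A" by (rule sn_upper)
  then show ?thesis by (simp add: outer_neg_slot)
qed

lemma sn_abs: assumes "unitfam x" shows "\<bar>A \<bullet> outer x\<bar> \<le> spectral_norm A"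
  using sn_upper[OF assms, of A] sn_neg[OF assms, of A] by linarith

lemma sn_nonneg: "0 \<le> spectral_norm (A :: ('d::finite,'n::finite) tensor)"
proof -
  obtain x :: "'d \<Rightarrow> real^'n" where u: "unitfam x" using exists_unitfam by auto
  show ?thesis using sn_abs[OF u, of A] by linarith
qed

lemma sn_lip: "spectral_norm a \<le> spectral_norm b + norm (a - b)"
proof (rule sn_least)
  fix x :: "'a \<Rightarrow> real^'b" assume u: "unitfam x"
  have "a \<bullet> outer x = b \<bullet> outer x + (a - b) \<bullet> outer x" by (simp add: inner_diff_left)
  also have "\<dots> \<le> spectral_norm b + norm (a - b)"
    using sn_upper[OF u, of b] sn_le_norm_elem[OF u, of "a - b"] by simp
  finally show "a \<bullet> outer x \<le> spectral_norm b + norm (a - b)" .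
qed

lemma sn_lip_abs: "\<bar>spectral_norm a - spectral_norm b\<bar> \<le> norm (a - b)"
  using sn_lip[of a b] sn_lip[of b a] by (simp add: norm_minus_commute)

lemma sn_tendsto: "q \<longlonglongrightarrow> p \<Longrightarrow> (\<lambda>k. spectral_norm (q k)) \<longlonglongrightarrow> spectral_norm p"
proof -
  assume q: "q \<longlonglongrightarrow> p"
  have "(\<lambda>k. norm (q k - p)) \<longlonglongrightarrow> 0"
    using q by (intro tendsto_norm_zero LIM_zero)
  then have "(\<lambda>k. spectral_norm (q k) - spectral_norm p) \<longlonglongrightarrow> 0"
    by (rule Lim_null_comparison[rotated]) (simp add: sn_lip_abs)
  then show ?thesis by (simp add: LIM_zero_iff)
qed

definition Kset :: "((real^'n::finite)^'d::finite) set" where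
  "Kset = {X. \<forall>j. norm (X $ j) = 1}"

lemma Kset_compact: "compact (Kset :: ((real^'n::finite)^'d::finite) set)"
proof -
  have b: "bounded (Kset :: ((real^'n)^'d) set)"
  proof -
    have "norm X \<le> real CARD('d)" if "X \<in> Kset" for X :: "(real^'n)^'d"
    proof -
      have "norm X = L2_set (\<lambda>i. norm (X $ i)) UNIV" by (simp add: norm_vec_def)
      also have "\<dots> \<le> (\<Sum>i\<in>UNIV. norm (X $ i))" by (rule L2_set_le_sum) auto
      also have "\<dots> = real CARD('d)" using that by (simp add: Kset_def)
      finally show ?thesis .
    qed
    then show ?thesis unfolding bounded_iff by blast
  qed
  have c: "closed (Kset :: ((real^'n)^'d) set)"
  proof -
    have "Kset = (\<Inter>j. {X :: (real^'n)^'d. norm (X $ j) = 1})" by (auto simp: Kset_def)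
    moreover have "closed (\<Inter>j. {X :: (real^'n)^'d. norm (X $ j) = 1})"
      by (intro closed_INT ballI closed_Collect_eq continuous_intros)
    ultimately show ?thesis by simp
  qed
  show ?thesis using b c by (simp add: compact_eq_bounded_closed)
qed

lemma Kset_iff: "X \<in> Kset \<longleftrightarrow> unitfam (($) X)"
  by (simp add: Kset_def)

lemma cont_outer_vec: "continuous_on S (\<lambda>X::(real^'n::finite)^'d::finite. outer (($) X))"
  unfolding outer_def by (intro continuous_intros)

lemma sn_attained: "\<exists>x. unitfam x \<and> A \<bullet> outer x = spectral_norm (A :: ('d::finite,'n::finite) tensor)"
proof -
  have ne: "(Kset :: ((real^'n)^'d) set) \<noteq> {}"
  proof -
    obtain x :: "'d \<Rightarrow> real^'n" where u: "unitfam x" using exists_unitfam by auto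
    then have "vec_lambda x \<in> Kset" by (simp add: Kset_iff)
    then show ?thesis by auto
  qed
  have "continuous_on Kset (\<lambda>X::(real^'n)^'d. A \<bullet> outer (($) X))"
    by (intro continuous_intros cont_outer_vec)
  then obtain X0 where X0: "X0 \<in> Kset" "\<forall>Y\<in>Kset. A \<bullet> outer (($) Y) \<le> A \<bullet> outer (($) X0)"
    using continuous_attains_sup[OF Kset_compact ne] by blast
  have "spectral_norm A \<le> A \<bullet> outer (($) X0)"
  proof (rule sn_least)
    fix x :: "'d \<Rightarrow> real^'n" assume "unitfam x"
    then have "vec_lambda x \<in> Kset" by (simp add: Kset_iff)
    then have "A \<bullet> outer (($) (vec_lambda x)) \<le> A \<bullet> outer (($) X0)" using X0(2) by blast
    moreover have "($) (vec_lambda x) = x" by (simp add: fun_eq_iff)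
    ultimately show "A \<bullet> outer x \<le> A \<bullet> outer (($) X0)" by simp
  qed
  moreover have "A \<bullet> outer (($) X0) \<le> spectral_norm A" using X0(1) by (simp add: Kset_iff sn_upper)
  ultimately show ?thesis using X0(1) Kset_iff by (intro exI[of _ "($) X0"]) auto
qed



abbreviation "sn \<equiv> spectral_norm"

lemma outer_axis: "outer (\<lambda>j. axis (idx j) (1::real)) = axis idx 1"
proof -
  have "(\<Prod>j\<in>UNIV. axis (idx j) (1::real) $ i j) = (if i = idx then 1 else 0)" for i :: "'a \<Rightarrow> 'b"
  proof (cases "i = idx")
    case True then show ?thesis by (simp add: axis_def)
  next
    case False
    then obtain j where "i j \<noteq> idx j" by auto
    then show ?thesis using False by (intro trans[OF prod_zero]) (auto simp: axis_def intro!: bexI[of _ j])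
  qed
  then show ?thesis by (simp add: outer_def vec_eq_iff axis_def)
qed

lemma sn_pos: assumes "A \<noteq> 0" shows "0 < sn (A :: ('d::finite,'n::finite) tensor)"
proof -
  obtain idx where i: "A $ idx \<noteq> 0" using assms by (auto simp: vec_eq_iff)
  let ?x = "\<lambda>j. axis (idx j) (1::real)"
  have u: "unitfam ?x" by (simp add: norm_axis_1)
  have "A \<bullet> outer ?x = A $ idx" by (simp add: outer_axis inner_axis)
  then show ?thesis using sn_abs[OF u, of A] i by linarith
qed

lemma sn_homog: assumes "0 \<le> c" shows "sn (c *\<^sub>R A) = c * sn (A :: ('d::finite,'n::finite) tensor)"
proof (rule antisym)
  show "sn (c *\<^sub>R A) \<le> c * sn A"
  proof (rule sn_least)
    fix x :: "'d \<Rightarrow> real^'n" assume u: "unitfam x"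
    show "c *\<^sub>R A \<bullet> outer x \<le> c * sn A" using sn_upper[OF u, of A] assms
      by (simp add: mult_left_mono)
  qed
  obtain x :: "'d \<Rightarrow> real^'n" where u: "unitfam x" and x: "A \<bullet> outer x = sn A" using sn_attained by blast
  show "c * sn A \<le> sn (c *\<^sub>R A)" using sn_upper[OF u, of "c *\<^sub>R A"] x by simp
qed

lemma outer_normalize:
  assumes "\<And>j. z j \<noteq> 0"
  shows "outer z = (\<Prod>j\<in>UNIV. norm (z j)) *\<^sub>R outer (\<lambda>j. z j /\<^sub>R norm (z j))"
    and "unitfam (\<lambda>j. z j /\<^sub>R norm (z j))"
proof -
  have "z = (\<lambda>j. norm (z j) *\<^sub>R (z j /\<^sub>R norm (z j)))" using assms by (simp add: fun_eq_iff)
  then show "outer z = (\<Prod>j\<in>UNIV. norm (z j)) *\<^sub>R outer (\<lambda>j. z j /\<^sub>R norm (z j))"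
    by (metis outer_scale_all)
  show "unitfam (\<lambda>j. z j /\<^sub>R norm (z j))" using assms by simp
qed

lemma sn_outer_bound: "A \<bullet> outer z \<le> sn A * norm (outer z)"
proof (cases "\<forall>j. z j \<noteq> 0")
  case True
  let ?u = "\<lambda>j. z j /\<^sub>R norm (z j)"
  let ?m = "\<Prod>j\<in>UNIV. norm (z j)"
  have e: "outer z = ?m *\<^sub>R outer ?u" and u: "unitfam ?u" using outer_normalize True by blast+
  have m: "0 \<le> ?m" by (simp add: prod_nonneg)
  have "A \<bullet> outer z = ?m * (A \<bullet> outer ?u)" by (simp add: e)
  also have "\<dots> \<le> ?m * sn A" using sn_upper[OF u, of A] m by (simp add: mult_left_mono)
  also have "\<dots> = sn A * norm (outer z)" by (simp add: norm_outer)
  finally show ?thesis .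
next
  case False
  then obtain j where "z j = 0" by auto
  then have "outer z = 0" by (rule outer_zero)
  then show ?thesis by simp
qed

lemma sym_subspace: "subspace (sym_tensors :: ('d::finite,'n::finite) tensor set)"
  unfolding subspace_def sym_tensors_def by auto

lemma outer_sym: "c *\<^sub>R outer (\<lambda>_. y) \<in> (sym_tensors :: ('d::finite,'n::finite) tensor set)"
proof -
  have "outer (\<lambda>_::'d. y) \<in> sym_tensors"
    unfolding sym_tensors_def outer_def
  proof (intro CollectI allI impI)
    fix \<sigma> :: "'d \<Rightarrow> 'd" and i :: "'d \<Rightarrow> 'n" assume b: "bij \<sigma>"
    have "(\<Prod>j\<in>UNIV. y $ i (\<sigma> j)) = (\<Prod>j\<in>UNIV. y $ i j)"
      using prod.reindex_bij_betw[of \<sigma> UNIV UNIV "\<lambda>j. y $ i j"] b by (simp add: bij_betw_def bij_def)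
    then show "(\<chi> i. \<Prod>j\<in>UNIV. (\<lambda>_. y) j $ i j) $ (i \<circ> \<sigma>) = (\<chi> i. \<Prod>j\<in>UNIV. (\<lambda>_. y) j $ i j) $ i"
      by simp
  qed
  then show ?thesis using sym_subspace by (rule subspace_scale[rotated])
qed

lemma norm_diff_sq: "norm (a - b)^2 = norm a ^ 2 - 2 * (a \<bullet> b) + norm b ^ 2" for a b :: "'a::real_inner"
  by (simp add: power2_norm_eq_inner inner_diff_left inner_diff_right inner_commute)

lemma best_from_max:
  fixes A :: "('d::finite,'n::finite) tensor"
  assumes A: "A \<noteq> 0" and u: "unitfam x" and x: "A \<bullet> outer x = sn A"
  shows "best_rank_one_approx A (sn A *\<^sub>R outer x)"
  unfolding best_rank_one_approx_def
proof (intro conjI allI impI)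
  have g: "0 < sn A" by (rule sn_pos[OF A])
  have n1: "norm (outer x) = 1" by (rule norm_outer_unit[OF u])
  show "rank_one (sn A *\<^sub>R outer x)"
    unfolding rank_one_def
  proof
    show "sn A *\<^sub>R outer x \<noteq> 0" using g n1 by auto
    show "\<exists>z. sn A *\<^sub>R outer x = outer z"
      by (rule exI[of _ "x(undefined := sn A *\<^sub>R x undefined)"]) (simp add: outer_scale_slot)
  qed
  fix X :: "('d,'n) tensor" assume "rank_one X"
  then obtain z where X: "X = outer z" by (auto simp: rank_one_def)
  have b: "A \<bullet> X \<le> sn A * norm X" using sn_outer_bound X by simp
  have "norm (A - sn A *\<^sub>R outer x)^2 = norm A ^ 2 - sn A ^ 2"
    unfolding norm_diff_sq by (simp add: x n1 power2_eq_square)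
  also have "\<dots> \<le> norm A ^ 2 - 2 * (A \<bullet> X) + norm X ^ 2"
  proof -
    have "0 \<le> (norm X - sn A)^2" by simp
    then have "0 \<le> norm X^2 - 2*(sn A * norm X) + sn A^2" by (simp add: power2_diff algebra_simps)
    then show ?thesis using b by linarith
  qed
  also have "\<dots> = norm (A - X)^2" by (simp add: norm_diff_sq)
  finally show "norm (A - sn A *\<^sub>R outer x) \<le> norm (A - X)"
    by (simp add: power2_le_iff_abs_le)
qed

lemma max_from_best:
  fixes A :: "('d::finite,'n::finite) tensor"
  assumes A: "A \<noteq> 0" and Y: "best_rank_one_approx A Y"
  shows "\<exists>x. unitfam x \<and> Y = sn A *\<^sub>R outer x \<and> A \<bullet> outer x = sn A"
proof -
  have g: "0 < sn A" by (rule sn_pos[OF A])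
  from Y obtain z where Yz: "Y = outer z" and Y0: "Y \<noteq> 0" and opt: "\<And>X. rank_one X \<Longrightarrow> norm (A - Y) \<le> norm (A - X)"
    by (auto simp: best_rank_one_approx_def rank_one_def)
  have nz: "\<And>j. z j \<noteq> 0" using Y0 Yz outer_zero by metis
  let ?u = "\<lambda>j. z j /\<^sub>R norm (z j)"
  define m where "m = (\<Prod>j\<in>UNIV. norm (z j))"
  have e: "Y = m *\<^sub>R outer ?u" and u: "unitfam ?u" using outer_normalize[where z=z, OF nz] Yz m_def by auto
  have m: "0 < m" unfolding m_def using nz by (simp add: prod_pos)
  define a where "a = A \<bullet> outer ?u"
  have ag: "a \<le> sn A" unfolding a_def by (rule sn_upper[OF u])
  obtain xs :: "'d \<Rightarrow> real^'n" where us: "unitfam xs" and xs: "A \<bullet> outer xs = sn A" using sn_attained by blast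
  have "best_rank_one_approx A (sn A *\<^sub>R outer xs)" by (rule best_from_max[OF A us xs])
  then have "rank_one (sn A *\<^sub>R outer xs)" by (simp add: best_rank_one_approx_def)
  then have "norm (A - Y) \<le> norm (A - sn A *\<^sub>R outer xs)" by (rule opt)
  then have "norm (A - Y)^2 \<le> norm (A - sn A *\<^sub>R outer xs)^2" by (simp add: power_mono)
  moreover have "norm (A - Y)^2 = norm A ^ 2 - 2 * m * a + m^2"
    unfolding e norm_diff_sq by (simp add: a_def norm_outer_unit[OF u] power2_eq_square)
  moreover have "norm (A - sn A *\<^sub>R outer xs)^2 = norm A ^ 2 - sn A ^ 2"
    unfolding norm_diff_sq by (simp add: xs norm_outer_unit[OF us] power2_eq_square)
  ultimately have ineq: "m^2 - 2 * m * a + sn A ^ 2 \<le> 0" by simp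
  have h1: "0 \<le> m * (sn A - a)" using m ag by simp
  have "(m - sn A)^2 + 2 * (m * (sn A - a)) = m^2 - 2 * m * a + sn A ^ 2" by (simp add: algebra_simps power2_eq_square)
  then have "(m - sn A)^2 = 0" "m * (sn A - a) = 0" using ineq h1 by (smt (verit) zero_le_power2)+
  then have "m = sn A" "a = sn A" using m by auto
  then show ?thesis using e u a_def by (intro exI[of _ ?u]) simp
qed



lemma sn_value_shift:
  fixes p :: "('d::finite,'n::finite) tensor"
  assumes u: "unitfam x" and px: "p \<bullet> outer x = sn p" and that: "0 \<le> t"
  shows "sn (p + t *\<^sub>R outer x) = sn p + t"
proof (rule antisym)
  have n1: "outer x \<bullet> outer x = 1" using norm_outer_unit[OF u] by (simp add: power2_norm_eq_inner[symmetric])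
  show "sn (p + t *\<^sub>R outer x) \<le> sn p + t"
  proof (rule sn_least)
    fix z :: "'d \<Rightarrow> real^'n" assume uz: "unitfam z"
    have "outer x \<bullet> outer z \<le> 1"
      using norm_cauchy_schwarz[of "outer x" "outer z"] norm_outer_unit[OF u] norm_outer_unit[OF uz] by simp
    then have "t * (outer x \<bullet> outer z) \<le> t" using that by (simp add: mult_left_le)
    then show "(p + t *\<^sub>R outer x) \<bullet> outer z \<le> sn p + t"
      using sn_upper[OF uz, of p] by (simp add: inner_add_left)
  qed
  show "sn p + t \<le> sn (p + t *\<^sub>R outer x)"
    using sn_upper[OF u, of "p + t *\<^sub>R outer x"] px n1 by (simp add: inner_add_left)
qed

lemma sn_diff_at_shift:
  fixes p :: "('d::finite,'n::finite) tensor"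
  assumes u: "unitfam x" and px: "p \<bullet> outer x = sn p" and t: "0 < t"
  shows "(sn has_derivative (\<lambda>h. outer x \<bullet> h)) (at (p + t *\<^sub>R outer x))"
proof -
  define E where "E = outer x"
  define q where "q = p + t *\<^sub>R E"
  have nE: "norm E = 1" unfolding E_def by (rule norm_outer_unit[OF u])
  have EE: "E \<bullet> E = 1" using nE by (simp add: power2_norm_eq_inner[symmetric])
  have gq: "sn q = sn p + t" unfolding q_def E_def using sn_value_shift[OF u px] t by simp
  have lo: "0 \<le> sn (q + h) - sn q - E \<bullet> h" for h
  proof -
    have "(q + h) \<bullet> E \<le> sn (q + h)" unfolding E_def by (rule sn_upper[OF u])
    moreover have "(q + h) \<bullet> E = sn q + E \<bullet> h"
      using gq px EE by (simp add: q_def E_def inner_add_left inner_commute[of h "outer x"])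
    ultimately show ?thesis by simp
  qed
  have up: "sn (q + h) - sn q - E \<bullet> h \<le> norm h ^ 2 / (2 * t)" for h
  proof -
    have "sn (q + h) \<le> sn q + E \<bullet> h + norm h ^ 2 / (2 * t)"
    proof (rule sn_least)
      fix z :: "'d \<Rightarrow> real^'n" assume uz: "unitfam z"
      define Z where "Z = outer z"
      have nZ: "norm Z = 1" unfolding Z_def by (rule norm_outer_unit[OF uz])
      define \<delta> where "\<delta> = norm (Z - E)"
      have d2: "\<delta>^2 = 2 - 2 * (E \<bullet> Z)" unfolding \<delta>_def norm_diff_sq using nZ nE by (simp add: inner_commute)
      have hZ: "h \<bullet> Z \<le> h \<bullet> E + norm h * \<delta>"
      proof -
        have "h \<bullet> (Z - E) \<le> norm h * \<delta>" unfolding \<delta>_def by (rule norm_cauchy_schwarz)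
        then show ?thesis by (simp add: inner_diff_right)
      qed
      have pZ: "p \<bullet> Z \<le> sn p" unfolding Z_def by (rule sn_upper[OF uz])
      have key: "norm h * \<delta> - t * \<delta>^2 / 2 \<le> norm h ^ 2 / (2 * t)"
      proof -
        have "0 \<le> (norm h - t * \<delta>)^2" by simp
        then have "2 * t * (norm h * \<delta>) - t^2 * \<delta>^2 \<le> norm h ^ 2"
          by (simp add: power2_diff power_mult_distrib algebra_simps)
        then have "(2 * t) * (norm h * \<delta> - t * \<delta>^2 / 2) \<le> norm h ^ 2"
          by (simp add: algebra_simps power2_eq_square)
        then show ?thesis using t by (simp add: field_simps)
      qed
      have "(q + h) \<bullet> Z = p \<bullet> Z + t * (E \<bullet> Z) + h \<bullet> Z"
        by (simp add: q_def inner_add_left)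
      also have "\<dots> \<le> sn p + t * (1 - \<delta>^2/2) + (h \<bullet> E + norm h * \<delta>)"
      proof -
        have "t * (1 - \<delta>^2/2) = t * (E \<bullet> Z)" unfolding d2 by (simp add: field_simps)
        then show ?thesis using pZ hZ by linarith
      qed
      also have "\<dots> \<le> sn q + E \<bullet> h + norm h ^ 2 / (2 * t)"
        using key gq by (simp add: inner_commute algebra_simps)
      finally show "(q + h) \<bullet> outer z \<le> sn q + E \<bullet> h + norm h ^ 2 / (2 * t)" by (simp add: Z_def)
    qed
    then show ?thesis by simp
  qed
  have "(sn has_derivative (\<lambda>h. E \<bullet> h)) (at q)"
    unfolding has_derivative_at
  proof
    show "bounded_linear ((\<bullet>) E)" by (rule bounded_linear_inner_right)
    have lim: "(\<lambda>h. norm h / (2 * t)) \<midarrow>0\<rightarrow> 0"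
      using t by (auto intro!: tendsto_eq_intros)
    show "(\<lambda>h. norm (sn (q + h) - sn q - E \<bullet> h) / norm h) \<midarrow>0\<rightarrow> 0"
    proof (rule Lim_null_comparison[OF _ lim])
      show "\<forall>\<^sub>F h in at 0. norm (norm (sn (q + h) - sn q - E \<bullet> h) / norm h) \<le> norm h / (2 * t)"
      proof (rule always_eventually, rule allI)
        fix h :: "('d,'n) tensor"
        show "norm (norm (sn (q + h) - sn q - E \<bullet> h) / norm h) \<le> norm h / (2 * t)"
        proof (cases "h = 0")
          case True then show ?thesis by simp
        next
          case False
          then have nh: "0 < norm h" by simp
          have "norm (sn (q + h) - sn q - E \<bullet> h) \<le> norm h ^ 2 / (2 * t)"
            using lo[of h] up[of h] by simp
          then have "norm (sn (q + h) - sn q - E \<bullet> h) / norm h \<le> norm h ^ 2 / (2 * t) / norm h"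
            by (rule divide_right_mono) (use nh in simp)
          also have "\<dots> = norm h / (2 * t)" using nh by (simp add: power2_eq_square)
          finally show ?thesis by simp
        qed
      qed
    qed
  qed
  then show ?thesis by (simp add: q_def E_def)
qed

lemma clarke_contains_max:
  fixes p :: "('d::finite,'n::finite) tensor"
  assumes S: "subspace S" and pS: "p \<in> S" and ES: "outer x \<in> S"
    and u: "unitfam x" and px: "p \<bullet> outer x = sn p"
  shows "outer x \<in> clarke_grad S sn p"
  unfolding clarke_grad_def
proof (rule hull_inc, rule CollectI, intro exI conjI allI)
  let ?ps = "\<lambda>k. p + inverse (real (Suc k)) *\<^sub>R outer x"
  fix k
  show "?ps k \<in> S" using S pS ES by (simp add: subspace_add subspace_scale)
  show "outer x \<in> S" by (rule ES)
  show "(sn has_derivative (\<bullet>) (outer x)) (at (?ps k) within S)"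
    by (rule has_derivative_at_withinI, rule sn_diff_at_shift[OF u px]) simp
next
  show "(\<lambda>k. p + inverse (real (Suc k)) *\<^sub>R outer x) \<longlonglongrightarrow> p"
    using tendsto_add[OF tendsto_const tendsto_scaleR[OF LIMSEQ_inverse_real_of_nat tendsto_const], of p "outer x"]
    by simp
  show "(\<lambda>k. outer x) \<longlonglongrightarrow> outer x" by simp
qed

lemma reverse_dir:
  fixes A :: "('d::finite,'n::finite) tensor" and r :: nat
  assumes S: "subspace S" and AS: "A \<in> S" and A0: "A \<noteq> 0"
    and Y: "\<forall>l<r. best_rank_one_approx A (Y l) \<and> Y l \<in> S"
    and \<alpha>: "\<forall>l<r. \<alpha> l > 0" "(\<Sum>l<r. \<alpha> l) = 1"
    and eq: "(sn A / norm A)\<^sup>2 *\<^sub>R A = (\<Sum>l<r. \<alpha> l *\<^sub>R Y l)"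
  shows "\<exists>c. c *\<^sub>R A \<in> clarke_grad S sn (A /\<^sub>R norm A)"
proof -
  define g where "g = sn A"
  have g: "0 < g" unfolding g_def by (rule sn_pos[OF A0])
  define p where "p = A /\<^sub>R norm A"
  have pS: "p \<in> S" unfolding p_def using S AS by (simp add: subspace_scale)
  have gp: "sn p = g / norm A" unfolding p_def g_def using sn_homog[of "inverse (norm A)" A]
    by (simp add: divide_inverse_commute)
  define E where "E l = Y l /\<^sub>R g" for l
  have Ein: "E l \<in> clarke_grad S sn p" if l: "l < r" for l
  proof -
    obtain x where u: "unitfam x" and Yx: "Y l = g *\<^sub>R outer x" and Ax: "A \<bullet> outer x = g"
      using max_from_best[OF A0, of "Y l"] Y l unfolding g_def by blast
    have El: "E l = outer x" unfolding E_def using Yx g by simp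
    have ES: "outer x \<in> S" using El E_def Y l S g by (metis subspace_scale)
    have "p \<bullet> outer x = (A \<bullet> outer x) / norm A" by (simp add: p_def divide_inverse_commute)
    then have px: "p \<bullet> outer x = sn p" using gp Ax by simp
    show ?thesis using clarke_contains_max[OF S pS ES u px] El by simp
  qed
  have conv: "convex (clarke_grad S sn p)" unfolding clarke_grad_def by (rule convex_convex_hull)
  have "(\<Sum>l<r. \<alpha> l *\<^sub>R E l) \<in> clarke_grad S sn p"
    by (rule convex_sum) (use \<alpha> Ein conv in auto)
  moreover have "(\<Sum>l<r. \<alpha> l *\<^sub>R E l) = (g / (norm A)^2) *\<^sub>R A"
  proof -
    have "(\<Sum>l<r. \<alpha> l *\<^sub>R E l) = inverse g *\<^sub>R (\<Sum>l<r. \<alpha> l *\<^sub>R Y l)"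
      by (simp add: E_def scaleR_sum_right mult.commute)
    also have "\<dots> = inverse g *\<^sub>R ((g / norm A)\<^sup>2 *\<^sub>R A)" using eq g_def by simp
    also have "\<dots> = (g / (norm A)^2) *\<^sub>R A" using g by (simp add: power2_eq_square field_simps)
    finally show ?thesis .
  qed
  ultimately show ?thesis unfolding p_def by metis
qed



lemma outer_upd: "outer (x(i := w)) = (\<chi> idx. w $ idx i * (\<Prod>k\<in>UNIV - {i}. x k $ idx k))"
proof -
  have "(\<Prod>k\<in>UNIV. (x(i := w)) k $ idx k) = w $ idx i * (\<Prod>k\<in>UNIV - {i}. x k $ idx k)" for idx
    by (subst prod.remove[of UNIV i]) (auto intro!: prod.cong)
  then show ?thesis by (simp add: outer_def)
qed

lemma outer_upd_add: "outer (x(i := u + v)) = outer (x(i := u)) + outer (x(i := v))"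
  by (simp add: outer_upd vec_eq_iff algebra_simps)

lemma outer_upd_scale: "outer (x(i := c *\<^sub>R u)) = c *\<^sub>R outer (x(i := u))"
  by (simp add: outer_upd vec_eq_iff algebra_simps)

lemma linear_outer_inner: "linear (\<lambda>u. A \<bullet> outer (x(i := u)))"
  by (rule linearI) (simp_all add: outer_upd_add outer_upd_scale inner_add_right)

definition swp :: "'a \<Rightarrow> 'a \<Rightarrow> 'a \<Rightarrow> 'a" where
  "swp i j k = (if k = i then j else if k = j then i else k)"

lemma swp_swp: "swp i j (swp i j k) = k"
  by (simp add: swp_def)

lemma bij_swp: "bij (swp i j)"
  by (rule o_bij[of "swp i j"]) (simp_all add: fun_eq_iff swp_swp)

lemma bij_comp_swp: "bij (\<lambda>idx::'a \<Rightarrow> 'b. idx \<circ> swp i j)"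
  by (rule o_bij[of "\<lambda>idx. idx \<circ> swp i j"]) (simp_all add: fun_eq_iff swp_swp)

lemma B_sym:
  fixes A :: "('d::finite,'n::finite) tensor"
  assumes AS: "A \<in> sym_tensors" and ij: "i \<noteq> j"
  shows "A \<bullet> outer (x(i := u, j := v)) = A \<bullet> outer (x(i := v, j := u))"
proof -
  let ?\<sigma> = "swp i j"
  let ?y = "x(i := u, j := v)" and ?y' = "x(i := v, j := u)"
  have yy: "?y k = ?y' (?\<sigma> k)" for k using ij by (simp add: swp_def)
  have T: "outer ?y $ (idx \<circ> ?\<sigma>) = outer ?y' $ idx" for idx :: "'d \<Rightarrow> 'n"
  proof -
    have "outer ?y $ (idx \<circ> ?\<sigma>) = (\<Prod>k\<in>UNIV. ?y' (?\<sigma> k) $ idx (?\<sigma> k))"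
      unfolding outer_def vec_lambda_beta comp_apply
      by (rule prod.cong[OF refl]) (metis yy)
    also have "\<dots> = (\<Prod>k\<in>UNIV. ?y' k $ idx k)"
      using prod.reindex_bij_betw[of ?\<sigma> UNIV UNIV "\<lambda>k. ?y' k $ idx k"] bij_swp[of i j]
      by (simp add: bij_betw_def bij_def)
    finally show ?thesis by (simp add: outer_def)
  qed
  have Asym: "A $ (idx \<circ> ?\<sigma>) = A $ idx" for idx
    using AS bij_swp[of i j] by (simp add: sym_tensors_def)
  have "A \<bullet> outer ?y = (\<Sum>idx\<in>UNIV. A $ idx * outer ?y $ idx)" by (simp add: inner_vec_def)
  also have "\<dots> = (\<Sum>idx\<in>UNIV. A $ (idx \<circ> ?\<sigma>) * outer ?y $ (idx \<circ> ?\<sigma>))"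
    by (rule sum.reindex_bij_betw[OF bij_comp_swp[of i j], symmetric])
  also have "\<dots> = (\<Sum>idx\<in>UNIV. A $ idx * outer ?y' $ idx)" by (simp add: Asym T)
  also have "\<dots> = A \<bullet> outer ?y'" by (simp add: inner_vec_def)
  finally show ?thesis .
qed

lemma riesz_real:
  fixes L :: "'a::euclidean_space \<Rightarrow> real"
  assumes "linear L" shows "\<exists>c. \<forall>u. L u = c \<bullet> u"
proof -
  have "L u = u \<bullet> (\<Sum>i\<in>Basis. L i *\<^sub>R i)" for u
    using Linear_Algebra.linear_componentwise[OF assms, of u 1] by (simp add: inner_sum_right mult.commute)
  then show ?thesis by (metis inner_commute)
qed

lemma linear_max_unit:
  fixes L :: "'a::euclidean_space \<Rightarrow> real"
  assumes lin: "linear L" and bd: "\<And>u. norm u = 1 \<Longrightarrow> L u \<le> lam" and a: "norm a = 1" and la: "L a = lam"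
  shows "L u = lam * (a \<bullet> u)"
proof -
  obtain c where c: "\<And>u. L u = c \<bullet> u" using riesz_real[OF lin] by blast
  have gen: "L u \<le> lam * norm u" for u
  proof (cases "u = 0")
    case True then show ?thesis using c by simp
  next
    case False
    have "L (u /\<^sub>R norm u) \<le> lam" using False by (intro bd) simp
    then have "L u / norm u \<le> lam" using c by (simp add: divide_inverse_commute)
    then show ?thesis using False by (simp add: divide_le_eq mult.commute)
  qed
  have nc: "norm c \<le> lam"
  proof (cases "c = 0")
    case True then show ?thesis using la c by simp
  next
    case False
    have "norm c ^ 2 \<le> lam * norm c" using gen[of c] c[of c] by (simp add: power2_norm_eq_inner)
    then show ?thesis using False by (simp add: power2_eq_square)
  qed
  have "norm (c - lam *\<^sub>R a) ^ 2 = norm c ^ 2 - 2 * lam * (c \<bullet> a) + lam^2"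
    unfolding norm_diff_sq using a by (simp add: power2_eq_square)
  also have "c \<bullet> a = lam" using la c by simp
  finally have "norm (c - lam *\<^sub>R a) ^ 2 = norm c ^ 2 - lam^2" by (simp add: power2_eq_square)
  moreover have "norm c ^ 2 \<le> lam^2" using nc by (simp add: power_mono)
  ultimately have "norm (c - lam *\<^sub>R a) ^ 2 \<le> 0" by linarith
  then have "c - lam *\<^sub>R a = 0" by simp
  then have "c = lam *\<^sub>R a" by simp
  then show ?thesis using c by simp
qed



lemma upd_twist: "i \<noteq> j \<Longrightarrow> x(i := u, j := v) = (x(j := v))(i := u)"
  by (simp add: fun_upd_twist)

lemma pair_max:
  fixes A :: "('d::finite,'n::finite) tensor"
  assumes AS: "A \<in> sym_tensors" and u: "unitfam x" and xm: "A \<bullet> outer x = sn A" and ij: "i \<noteq> j"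
  shows "x i + x j \<noteq> 0 \<Longrightarrow>
           A \<bullet> outer (x(i := (x i + x j) /\<^sub>R norm (x i + x j), j := (x i + x j) /\<^sub>R norm (x i + x j))) = sn A"
    and "x i - x j \<noteq> 0 \<Longrightarrow>
           A \<bullet> outer (x(i := (x i - x j) /\<^sub>R norm (x i - x j), j := - ((x i - x j) /\<^sub>R norm (x i - x j)))) = sn A"
proof -
  define lam where "lam = sn A"
  define a where "a = x i"
  define b where "b = x j"
  define B where "B u v = A \<bullet> outer (x(i := u, j := v))" for u v
  have na: "norm a = 1" and nb: "norm b = 1" using u by (simp_all add: a_def b_def)
  have bnd: "B u v \<le> lam" if "norm u = 1" "norm v = 1" for u v
  proof -
    have "unitfam (x(i := u, j := v))" using u that by auto
    then show ?thesis unfolding B_def lam_def by (rule sn_upper)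
  qed
  have Bab: "B a b = lam" unfolding B_def a_def b_def lam_def using xm by simp
  have lin1: "linear (\<lambda>u. B u v)" for v
    unfolding B_def upd_twist[OF ij] by (rule linear_outer_inner)
  have Badd: "B (u1 + u2) v = B u1 v + B u2 v" for u1 u2 v
    unfolding B_def upd_twist[OF ij] by (simp add: outer_upd_add inner_add_right)
  have Bscale: "B (c *\<^sub>R u1) v = c * B u1 v" for c u1 v
    unfolding B_def upd_twist[OF ij] by (simp add: outer_upd_scale)
  have Bsym: "B u v = B v u" for u v unfolding B_def by (rule B_sym[OF AS ij])
  have F1: "B u b = lam * (a \<bullet> u)" for u
    by (rule linear_max_unit[OF lin1 _ na Bab]) (simp add: bnd nb)
  have lin2: "linear (\<lambda>v. B a v)"
  proof -
    have "(\<lambda>v. B a v) = (\<lambda>v. B v a)" using Bsym by auto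
    then show ?thesis using lin1 by simp
  qed
  have F2: "B a v = lam * (b \<bullet> v)" for v
    by (rule linear_max_unit[OF lin2 _ nb Bab]) (simp add: bnd na)
  have key: "B (a + b) v = lam * ((a + b) \<bullet> v)" for v
    using Badd[of a b v] F2[of v] Bsym[of b v] F1[of v] by (simp add: algebra_simps inner_add_left)
  have key2: "B (a - b) v = lam * ((b - a) \<bullet> v)" for v
  proof -
    have "B (a - b) v = B a v - B b v" using Badd[of a "-b" v] Bscale[of "-1" b v] by simp
    then show ?thesis using F2[of v] Bsym[of b v] F1[of v] by (simp add: algebra_simps inner_diff_left)
  qed
  show "x i + x j \<noteq> 0 \<Longrightarrow>
           A \<bullet> outer (x(i := (x i + x j) /\<^sub>R norm (x i + x j), j := (x i + x j) /\<^sub>R norm (x i + x j))) = sn A"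
  proof -
    assume nz: "x i + x j \<noteq> 0"
    define c where "c = inverse (norm (a + b))"
    define w where "w = c *\<^sub>R (a + b)"
    have "B w w = c * (lam * ((a + b) \<bullet> w))" unfolding w_def[of] by (simp add: Bscale key)
    also have "\<dots> = lam * (c * c * ((a + b) \<bullet> (a + b)))" by (simp add: w_def algebra_simps)
    also have "c * c * ((a + b) \<bullet> (a + b)) = 1"
      using nz by (simp add: c_def a_def b_def power2_norm_eq_inner[symmetric] power2_eq_square field_simps)
    finally have "B w w = lam" by simp
    then show ?thesis by (simp add: B_def w_def c_def a_def b_def lam_def divide_inverse_commute)
  qed
  show "x i - x j \<noteq> 0 \<Longrightarrow>
           A \<bullet> outer (x(i := (x i - x j) /\<^sub>R norm (x i - x j), j := - ((x i - x j) /\<^sub>R norm (x i - x j)))) = sn A"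
  proof -
    assume nz: "x i - x j \<noteq> 0"
    define c where "c = inverse (norm (a - b))"
    define w where "w = c *\<^sub>R (a - b)"
    have "B w (-w) = c * (lam * ((b - a) \<bullet> (-w)))" unfolding w_def[of] by (simp add: Bscale key2)
    also have "\<dots> = lam * (c * c * ((a - b) \<bullet> (a - b)))" by (simp add: w_def algebra_simps inner_diff_left inner_diff_right)
    also have "c * c * ((a - b) \<bullet> (a - b)) = 1"
      using nz by (simp add: c_def a_def b_def power2_norm_eq_inner[symmetric] power2_eq_square field_simps)
    finally have "B w (-w) = lam" by simp
    then show ?thesis by (simp add: B_def w_def c_def a_def b_def lam_def divide_inverse_commute)
  qed
qed



definition opm :: "real^'n::finite \<Rightarrow> real^'n^'n" where
  "opm y = (\<chi> m m'. y $ m * y $ m')"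

definition Mf :: "('d::finite \<Rightarrow> real^'n::finite) \<Rightarrow> real^'n^'n" where
  "Mf x = (\<Sum>k\<in>UNIV. opm (x k))"

lemma opm_neg: "opm (- y) = opm y" by (simp add: opm_def vec_eq_iff)

lemma opm_scale: "opm (c *\<^sub>R y) = (c * c) *\<^sub>R opm y" by (simp add: opm_def vec_eq_iff algebra_simps)

lemma opm_parallel: "opm a + opm b = (1/2) *\<^sub>R (opm (a + b) + opm (a - b))"
  by (simp add: opm_def vec_eq_iff algebra_simps)

lemma Mf_upd:
  assumes ij: "i \<noteq> j"
  shows "Mf (x(i := u, j := v)) = (\<Sum>k\<in>UNIV - {i, j}. opm (x k)) + opm u + opm v"
proof -
  have "Mf (x(i := u, j := v)) = (\<Sum>k\<in>UNIV - {i, j}. opm ((x(i := u, j := v)) k)) + (\<Sum>k\<in>{i, j}. opm ((x(i := u, j := v)) k))"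
    unfolding Mf_def by (rule sum.subset_diff) auto
  also have "(\<Sum>k\<in>UNIV - {i, j}. opm ((x(i := u, j := v)) k)) = (\<Sum>k\<in>UNIV - {i, j}. opm (x k))"
    by (rule sum.cong) auto
  also have "(\<Sum>k\<in>{i, j}. opm ((x(i := u, j := v)) k)) = opm u + opm v" using ij by simp
  finally show ?thesis by (simp only: add.assoc)
qed

lemma Mf_self: "i \<noteq> j \<Longrightarrow> Mf x = (\<Sum>k\<in>UNIV - {i, j}. opm (x k)) + opm (x i) + opm (x j)"
  using Mf_upd[of i j x "x i" "x j"] by simp

lemma norm_convex_identity:
  fixes U V :: "'a::real_inner"
  assumes "P + R = 1"
  shows "norm (P *\<^sub>R U + R *\<^sub>R V)^2 = P * norm U ^ 2 + R * norm V ^ 2 - P * R * norm (U - V) ^ 2"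
proof -
  have R: "R = 1 - P" using assms by simp
  show ?thesis unfolding R power2_norm_eq_inner
    by (simp add: inner_add_left inner_add_right inner_diff_left inner_diff_right inner_commute algebra_simps)
qed

definition Qf :: "real^'n^'n \<Rightarrow> real^'n::finite \<Rightarrow> real" where
  "Qf M v = (\<Sum>m\<in>UNIV. \<Sum>m'\<in>UNIV. M $ m $ m' * v $ m * v $ m')"

lemma Qf_opm: "Qf (opm y) v = (y \<bullet> v)^2"
proof -
  have "(y \<bullet> v)^2 = (\<Sum>m\<in>UNIV. y $ m * v $ m) * (\<Sum>m'\<in>UNIV. y $ m' * v $ m')"
    by (simp add: inner_vec_def power2_eq_square)
  also have "\<dots> = (\<Sum>m\<in>UNIV. \<Sum>m'\<in>UNIV. (y $ m * v $ m) * (y $ m' * v $ m'))" by (rule sum_product)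
  finally show ?thesis by (simp add: Qf_def opm_def algebra_simps)
qed

lemma psi_strict:
  fixes x :: "'d::finite \<Rightarrow> real^'n::finite"
  assumes u: "unitfam x" and ij: "i \<noteq> j" and np: "x i + x j \<noteq> 0" and nm: "x i - x j \<noteq> 0"
  defines "w \<equiv> (x i + x j) /\<^sub>R norm (x i + x j)" and "w' \<equiv> (x i - x j) /\<^sub>R norm (x i - x j)"
  shows "norm (Mf x)^2 < norm (Mf (x(i := w, j := w)))^2 \<or> norm (Mf x)^2 < norm (Mf (x(i := w', j := - w')))^2"
proof -
  define a where "a = x i"
  define b where "b = x j"
  have na: "norm a = 1" and nb: "norm b = 1" using u by (simp_all add: a_def b_def)
  define P where "P = norm (a + b)^2 / 4"
  define R where "R = norm (a - b)^2 / 4"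
  have PR: "P + R = 1"
  proof -
    have "norm (a + b)^2 + norm (a - b)^2 = 4"
      using na nb unfolding power2_norm_eq_inner norm_eq_1
      by (simp add: inner_add_left inner_add_right inner_diff_left inner_diff_right inner_commute)
    then show ?thesis by (simp add: P_def R_def)
  qed
  have P0: "0 < P" using np by (simp add: P_def a_def b_def)
  have R0: "0 < R" using nm by (simp add: R_def a_def b_def)
  define Rr where "Rr = (\<Sum>k\<in>UNIV - {i, j}. opm (x k))"
  define U where "U = Rr + 2 *\<^sub>R opm w"
  define V where "V = Rr + 2 *\<^sub>R opm w'"
  have MU: "Mf (x(i := w, j := w)) = U" unfolding U_def Rr_def by (simp only: Mf_upd[OF ij] scaleR_2 add.assoc)
  have MV: "Mf (x(i := w', j := - w')) = V" unfolding V_def Rr_def by (simp only: Mf_upd[OF ij] scaleR_2 add.assoc opm_neg)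
  have ow: "P *\<^sub>R (2 *\<^sub>R opm w) = (1/2) *\<^sub>R opm (a + b)"
  proof -
    define ii where "ii = inverse (norm (a + b))"
    have cw: "opm w = (ii * ii) *\<^sub>R opm (a + b)" unfolding w_def a_def b_def ii_def by (rule opm_scale)
    have k: "P * (2 * (ii * ii)) = 1/2" using np by (simp add: P_def ii_def a_def b_def power2_eq_square field_simps)
    have "P *\<^sub>R (2 *\<^sub>R opm w) = (P * (2 * (ii * ii))) *\<^sub>R opm (a + b)" by (simp add: cw)
    then show ?thesis by (simp only: k)
  qed
  have ow': "R *\<^sub>R (2 *\<^sub>R opm w') = (1/2) *\<^sub>R opm (a - b)"
  proof -
    define ii where "ii = inverse (norm (a - b))"
    have cw: "opm w' = (ii * ii) *\<^sub>R opm (a - b)" unfolding w'_def a_def b_def ii_def by (rule opm_scale)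
    have k: "R * (2 * (ii * ii)) = 1/2" using nm by (simp add: R_def ii_def a_def b_def power2_eq_square field_simps)
    have "R *\<^sub>R (2 *\<^sub>R opm w') = (R * (2 * (ii * ii))) *\<^sub>R opm (a - b)" by (simp add: cw)
    then show ?thesis by (simp only: k)
  qed
  have MX: "Mf x = P *\<^sub>R U + R *\<^sub>R V"
  proof -
    have "P *\<^sub>R U + R *\<^sub>R V = (P + R) *\<^sub>R Rr + (P *\<^sub>R (2 *\<^sub>R opm w) + R *\<^sub>R (2 *\<^sub>R opm w'))"
      by (simp add: U_def V_def scaleR_add_right scaleR_add_left algebra_simps)
    also have "\<dots> = Rr + (opm a + opm b)" using PR ow ow' opm_parallel[of a b]
      by (simp add: scaleR_add_right)
    also have "\<dots> = Mf x" using Mf_self[OF ij, of x] by (simp add: Rr_def a_def b_def add.assoc)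
    finally show ?thesis by simp
  qed
  have UV: "U \<noteq> V"
  proof
    assume "U = V"
    then have e: "opm w = opm w'" by (simp add: U_def V_def)
    have nw: "norm w = 1" using np by (simp add: w_def)
    have ww': "w \<bullet> w' = 0"
    proof -
      have "(a + b) \<bullet> (a - b) = 0" using na nb unfolding norm_eq_1
        by (simp add: inner_add_left inner_add_right inner_diff_left inner_diff_right inner_commute)
      then show ?thesis by (simp add: w_def w'_def a_def b_def)
    qed
    have "Qf (opm w) w = 1" using nw by (simp add: Qf_opm power2_norm_eq_inner[symmetric])
    moreover have "Qf (opm w') w = 0" using ww' by (simp add: Qf_opm inner_commute)
    ultimately show False using e by simp
  qed
  have "norm (Mf x)^2 = P * norm U ^ 2 + R * norm V ^ 2 - P * R * norm (U - V) ^ 2"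
    unfolding MX by (rule norm_convex_identity[OF PR])
  moreover have "0 < P * R * norm (U - V) ^ 2" using P0 R0 UV by simp
  ultimately have lt: "norm (Mf x)^2 < P * norm U ^ 2 + R * norm V ^ 2" by linarith
  show ?thesis
  proof (rule ccontr)
    assume "\<not> ?thesis"
    then have "norm U ^ 2 \<le> norm (Mf x)^2" "norm V ^ 2 \<le> norm (Mf x)^2" using MU MV by (simp_all add: not_less)
    then have "P * norm U ^ 2 + R * norm V ^ 2 \<le> P * norm (Mf x)^2 + R * norm (Mf x)^2"
      using P0 R0 by (intro add_mono mult_left_mono) auto
    also have "\<dots> = norm (Mf x)^2" by (simp add: PR flip: distrib_right)
    finally show False using lt by simp
  qed
qed



lemma banach_pairs:
  fixes A :: "('d::finite,'n::finite) tensor"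
  assumes AS: "A \<in> sym_tensors"
  shows "\<exists>x. unitfam x \<and> A \<bullet> outer x = sn A \<and> (\<forall>i j. x i = x j \<or> x i = - x j)"
proof -
  define f where "f X = A \<bullet> outer (($) X)" for X :: "(real^'n)^'d"
  define Ms where "Ms = Kset \<inter> {X. f X = sn A}"
  have cf: "continuous_on UNIV f" unfolding f_def by (intro continuous_intros cont_outer_vec)
  have cMs: "compact Ms" unfolding Ms_def
    by (rule compact_Int_closed[OF Kset_compact]) (intro closed_Collect_eq cf continuous_intros)
  obtain x0 :: "'d \<Rightarrow> real^'n" where u0: "unitfam x0" and x0: "A \<bullet> outer x0 = sn A" using sn_attained by blast
  have eta: "($) (vec_lambda x) = x" for x :: "'d \<Rightarrow> real^'n" by (simp add: fun_eq_iff)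
  have inMs: "vec_lambda x \<in> Ms" if "unitfam x" "A \<bullet> outer x = sn A" for x :: "'d \<Rightarrow> real^'n"
    using that by (simp add: Ms_def Kset_iff f_def eta)
  have ne: "Ms \<noteq> {}" using inMs[OF u0 x0] by auto
  define \<Psi> where "\<Psi> X = norm (Mf (($) X))^2" for X :: "(real^'n)^'d"
  have c\<Psi>: "continuous_on Ms \<Psi>" unfolding \<Psi>_def Mf_def opm_def by (intro continuous_intros)
  obtain Xs where Xs: "Xs \<in> Ms" and Xmax: "\<And>Y. Y \<in> Ms \<Longrightarrow> \<Psi> Y \<le> \<Psi> Xs"
    using continuous_attains_sup[OF cMs ne c\<Psi>] by blast
  define x where "x = ($) Xs"
  have u: "unitfam x" and xm: "A \<bullet> outer x = sn A" using Xs by (simp_all add: x_def Ms_def Kset_iff f_def)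
  have "\<forall>i j. x i = x j \<or> x i = - x j"
  proof (rule ccontr)
    assume "\<not> ?thesis"
    then obtain i j where nij: "\<not> (x i = x j \<or> x i = - x j)" by blast
    then have ij: "i \<noteq> j" by auto
    have np: "x i + x j \<noteq> 0"
    proof
      assume "x i + x j = 0"
      then have "x i = - x j" by (simp add: eq_neg_iff_add_eq_0)
      with nij show False by simp
    qed
    have nm: "x i - x j \<noteq> 0" using nij by simp
    define w where "w = (x i + x j) /\<^sub>R norm (x i + x j)"
    define w' where "w' = (x i - x j) /\<^sub>R norm (x i - x j)"
    have m1: "A \<bullet> outer (x(i := w, j := w)) = sn A" unfolding w_def by (rule pair_max(1)[OF AS u xm ij np])
    have m2: "A \<bullet> outer (x(i := w', j := - w')) = sn A" unfolding w'_def by (rule pair_max(2)[OF AS u xm ij nm])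
    have u1: "unitfam (x(i := w, j := w))" using u np by (auto simp: w_def)
    have u2: "unitfam (x(i := w', j := - w'))" using u nm by (auto simp: w'_def)
    have "\<Psi> (vec_lambda (x(i := w, j := w))) \<le> \<Psi> Xs" by (rule Xmax[OF inMs[OF u1 m1]])
    then have l1: "norm (Mf (x(i := w, j := w)))^2 \<le> norm (Mf x)^2" by (simp add: \<Psi>_def eta x_def)
    have "\<Psi> (vec_lambda (x(i := w', j := - w'))) \<le> \<Psi> Xs" by (rule Xmax[OF inMs[OF u2 m2]])
    then have l2: "norm (Mf (x(i := w', j := - w')))^2 \<le> norm (Mf x)^2" by (simp add: \<Psi>_def eta x_def)
    show False using psi_strict[OF u ij np nm] l1 l2 unfolding w_def w'_def by linarith
  qed
  then show ?thesis using u xm by (intro exI[of _ x]) simp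
qed

lemma sym_unit_outer:
  assumes "s = 1 \<or> s = -1" and "norm y = 1"
  shows "\<exists>x. unitfam x \<and> s *\<^sub>R outer (\<lambda>_::'d::finite. y) = outer (x :: 'd \<Rightarrow> real^'n::finite)"
proof -
  let ?x = "(\<lambda>_::'d. y)(undefined := s *\<^sub>R y)"
  have "unitfam ?x" using assms by auto
  moreover have "s *\<^sub>R outer (\<lambda>_::'d. y) = outer ?x" using outer_scale_slot[of "\<lambda>_::'d. y" undefined s] by simp
  ultimately show ?thesis by (intro exI[of _ ?x] conjI)
qed

lemma banach_sym:
  fixes A :: "('d::finite,'n::finite) tensor"
  assumes AS: "A \<in> sym_tensors"
  shows "\<exists>y s. norm y = 1 \<and> (s = 1 \<or> s = -1) \<and> A \<bullet> (s *\<^sub>R outer (\<lambda>_. y)) = sn A"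
proof -
  obtain x where u: "unitfam x" and xm: "A \<bullet> outer x = sn A" and pm: "\<forall>i j. x i = x j \<or> x i = - x j"
    using banach_pairs[OF AS] by blast
  define y where "y = x undefined"
  define s where "s k = (if x k = y then 1 else - 1 :: real)" for k
  have xs: "x = (\<lambda>k. s k *\<^sub>R y)"
  proof
    fix k show "x k = s k *\<^sub>R y" using pm[rule_format, of k undefined] by (auto simp: s_def y_def)
  qed
  have ox: "outer x = (\<Prod>k\<in>UNIV. s k) *\<^sub>R outer (\<lambda>_. y)" unfolding xs by (rule outer_scale_all)
  have pr:  "(\<Prod>k\<in>UNIV. s k) = 1 \<or> (\<Prod>k\<in>UNIV. s k) = -1"
  proof -
    have "\<bar>\<Prod>k\<in>UNIV. s k\<bar> = (\<Prod>k\<in>UNIV. \<bar>s k\<bar>)" by (rule abs_prod)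
    also have "\<dots> = 1" by (rule prod.neutral) (simp add: s_def)
    finally show ?thesis by linarith
  qed
  have ny: "norm y = 1" using u by (simp add: y_def)
  show ?thesis
    by (rule exI[of _ y], rule exI[of _ "\<Prod>k\<in>UNIV. s k"]) (use ny pr xm ox in simp)
qed



lemma grad_eq_max:
  fixes q v E :: "('d::finite,'n::finite) tensor"
  assumes S: "subspace S" and qS: "q \<in> S" and vS: "v \<in> S" and ES: "E \<in> S"
    and d: "(sn has_derivative (\<lambda>h. v \<bullet> h)) (at q within S)"
    and Eb: "\<And>r. r \<bullet> E \<le> sn r" and qE: "q \<bullet> E = sn q"
  shows "v = E"
proof -
  have hd: "v \<bullet> h = E \<bullet> h" if hS: "h \<in> S" for h
  proof -
    define f where "f t = q + t *\<^sub>R h" for t :: real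
    have fd: "(f has_derivative (\<lambda>t. t *\<^sub>R h)) (at 0 within UNIV)"
      unfolding f_def by (auto intro!: derivative_eq_intros)
    have fS: "f ` UNIV \<subseteq> S" unfolding f_def using S qS hS by (auto intro: subspace_add subspace_scale)
    have d2: "(sn has_derivative (\<lambda>h. v \<bullet> h)) (at (f 0) within (f ` UNIV))"
      using has_derivative_subset[OF d fS] by (simp add: f_def)
    have "((\<lambda>t. sn (f t)) has_derivative (\<lambda>t. v \<bullet> (t *\<^sub>R h))) (at 0)"
      using has_derivative_in_compose[OF fd d2] by simp
    then have "((\<lambda>t. sn (f t) - t * (E \<bullet> h)) has_derivative (\<lambda>t. v \<bullet> (t *\<^sub>R h) - t * (E \<bullet> h))) (at 0)"
      by (auto intro!: derivative_eq_intros)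
    moreover have "(\<lambda>t. v \<bullet> (t *\<^sub>R h) - t * (E \<bullet> h)) = (*) (v \<bullet> h - E \<bullet> h)"
      by (auto simp: fun_eq_iff algebra_simps)
    ultimately have D: "((\<lambda>t. sn (f t) - t * (E \<bullet> h)) has_real_derivative (v \<bullet> h - E \<bullet> h)) (at 0)"
      by (simp add: has_field_derivative_def)
    have mn: "\<forall>y. \<bar>0 - y\<bar> < 1 \<longrightarrow> sn (f 0) - 0 * (E \<bullet> h) \<le> sn (f y) - y * (E \<bullet> h)"
    proof (intro allI impI)
      fix y :: real
      have "f y \<bullet> E \<le> sn (f y)" by (rule Eb)
      moreover have "f y \<bullet> E = sn q + y * (E \<bullet> h)" by (simp add: f_def inner_add_left qE inner_commute[of h E])
      ultimately show "sn (f 0) - 0 * (E \<bullet> h) \<le> sn (f y) - y * (E \<bullet> h)" by (simp add: f_def)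
    qed
    have "v \<bullet> h - E \<bullet> h = 0" by (rule DERIV_local_min[OF D _ mn]) simp
    then show ?thesis by simp
  qed
  have "v - E \<in> S" using S vS ES by (rule subspace_diff)
  then have "v \<bullet> (v - E) = E \<bullet> (v - E)" by (rule hd)
  then have "(v - E) \<bullet> (v - E) = 0" by (simp add: inner_diff_left)
  then show ?thesis by simp
qed

definition Tset :: "('d::finite,'n::finite) tensor set" where
  "Tset = {s *\<^sub>R outer (\<lambda>_. y) | s y. (s = 1 \<or> s = -1) \<and> norm y = 1}"

lemma Tset_closed: "closed (Tset :: ('d::finite,'n::finite) tensor set)"
proof -
  have "Tset = (\<lambda>z. fst z *\<^sub>R outer (\<lambda>_::'d. snd z :: real^'n)) ` ({1, -1} \<times> sphere 0 1)"
    unfolding Tset_def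
  proof (intro set_eqI iffI)
    fix T :: "('d,'n) tensor" assume "T \<in> {s *\<^sub>R outer (\<lambda>_. y) | s y. (s = 1 \<or> s = -1) \<and> norm y = 1}"
    then obtain s y where "T = s *\<^sub>R outer (\<lambda>_. y)" "s = 1 \<or> s = -1" "norm (y :: real^'n) = 1" by auto
    then show "T \<in> (\<lambda>z. fst z *\<^sub>R outer (\<lambda>_::'d. snd z :: real^'n)) ` ({1, -1} \<times> sphere 0 1)"
      by (intro image_eqI[of _ _ "(s, y)"]) auto
  next
    fix T :: "('d,'n) tensor" assume "T \<in> (\<lambda>z. fst z *\<^sub>R outer (\<lambda>_::'d. snd z :: real^'n)) ` ({1, -1} \<times> sphere 0 1)"
    then obtain z where z: "z \<in> {1, -1} \<times> sphere (0 :: real^'n) 1" "T = fst z *\<^sub>R outer (\<lambda>_::'d. snd z)" by auto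
    show "T \<in> {s *\<^sub>R outer (\<lambda>_. y) | s y. (s = 1 \<or> s = -1) \<and> norm y = 1}"
      using z by (intro CollectI exI[of _ "fst z"] exI[of _ "snd z"]) auto
  qed
  moreover have "compact ((\<lambda>z. fst z *\<^sub>R outer (\<lambda>_::'d. snd z :: real^'n)) ` ({1, -1} \<times> sphere 0 1))"
    by (intro compact_continuous_image compact_Times compact_sphere finite_imp_compact)
      (auto simp: outer_def intro!: continuous_intros)
  ultimately show ?thesis by (simp add: compact_imp_closed)
qed

lemma grad_form:
  fixes q v :: "('d::finite,'n::finite) tensor"
  assumes qS: "q \<in> sym_tensors" and vS: "v \<in> sym_tensors"
    and d: "(sn has_derivative (\<lambda>h. v \<bullet> h)) (at q within sym_tensors)"
  shows "v \<in> Tset \<and> q \<bullet> v = sn q"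
proof -
  obtain y s where ny: "norm y = 1" and s: "s = 1 \<or> s = -1" and qm: "q \<bullet> (s *\<^sub>R outer (\<lambda>_. y)) = sn q"
    using banach_sym[OF qS] by blast
  define E where "E = s *\<^sub>R outer (\<lambda>_::'d. y)"
  obtain x where u: "unitfam x" and Ex: "E = outer x" using sym_unit_outer[OF s ny] unfolding E_def by blast
  have ES: "E \<in> sym_tensors" unfolding E_def by (rule outer_sym)
  have Eb: "r \<bullet> E \<le> sn r" for r unfolding Ex by (rule sn_upper[OF u])
  have "v = E" by (rule grad_eq_max[OF sym_subspace qS vS ES d Eb]) (use qm E_def in simp)
  then show ?thesis using s ny qm unfolding Tset_def E_def by blast
qed

lemma clarke_subset:
  fixes p :: "('d::finite,'n::finite) tensor"
  shows "clarke_grad sym_tensors sn p \<subseteq> convex hull {v \<in> Tset. p \<bullet> v = sn p}"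
  unfolding clarke_grad_def
proof (rule hull_mono, rule subsetI)
  fix v assume "v \<in> {v. \<exists>ps vs. (\<forall>k. ps k \<in> sym_tensors \<and> vs k \<in> sym_tensors \<and>
                     (sn has_derivative (\<lambda>h. vs k \<bullet> h)) (at (ps k) within sym_tensors))
               \<and> ps \<longlonglongrightarrow> p \<and> vs \<longlonglongrightarrow> v}"
  then obtain ps vs where H: "\<And>k. ps k \<in> sym_tensors \<and> vs k \<in> sym_tensors \<and>
                     (sn has_derivative (\<lambda>h. vs k \<bullet> h)) (at (ps k) within sym_tensors)"
    and ps: "ps \<longlonglongrightarrow> p" and vs: "vs \<longlonglongrightarrow> v" by blast
  have G: "vs k \<in> Tset \<and> ps k \<bullet> vs k = sn (ps k)" for k using H[of k] grad_form by blast
  have vT: "v \<in> Tset" by (rule closed_sequentially[OF Tset_closed _ vs]) (use G in blast)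
  have "(\<lambda>k. ps k \<bullet> vs k) \<longlonglongrightarrow> p \<bullet> v" by (rule tendsto_inner[OF ps vs])
  moreover have "(\<lambda>k. ps k \<bullet> vs k) \<longlonglongrightarrow> sn p" using sn_tendsto[OF ps] G by simp
  ultimately have "p \<bullet> v = sn p" by (rule LIMSEQ_unique)
  then show "v \<in> {v \<in> Tset. p \<bullet> v = sn p}" using vT by simp
qed



lemma K_facts:
  fixes A v :: "('d::finite,'n::finite) tensor"
  assumes A0: "A \<noteq> 0" and vT: "v \<in> Tset" and pv: "(A /\<^sub>R norm A) \<bullet> v = sn (A /\<^sub>R norm A)"
  shows "A \<bullet> v = sn A" and "best_rank_one_approx A (sn A *\<^sub>R v)" and "sym_rank_one_form (sn A *\<^sub>R v)"
proof -
  obtain s y where s: "s = 1 \<or> s = -1" and ny: "norm (y :: real^'n) = 1" and v: "v = s *\<^sub>R outer (\<lambda>_::'d. y)"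
    using vT unfolding Tset_def by blast
  obtain x where u: "unitfam x" and vx: "v = outer x" using sym_unit_outer[OF s ny] v by blast
  have nA: "0 < norm A" using A0 by simp
  have gp: "sn (A /\<^sub>R norm A) = sn A / norm A"
    using sn_homog[of "inverse (norm A)" A] by (simp add: divide_inverse_commute)
  have "(A /\<^sub>R norm A) \<bullet> v = (A \<bullet> v) / norm A" by (simp add: divide_inverse_commute)
  then show Av: "A \<bullet> v = sn A" using pv gp nA by simp
  show "best_rank_one_approx A (sn A *\<^sub>R v)" unfolding vx by (rule best_from_max[OF A0 u]) (use Av vx in simp)
  show "sym_rank_one_form (sn A *\<^sub>R v)" unfolding sym_rank_one_form_def v
    by (intro exI[of _ "sn A * s"] exI[of _ y]) simp
qed

lemma forward_dir:
  fixes A :: "('d::finite,'n::finite) tensor"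
  assumes A0: "A \<noteq> 0" and crit: "c *\<^sub>R A \<in> clarke_grad sym_tensors sn (A /\<^sub>R norm A)"
  shows "\<exists>(r::nat) (Y::nat \<Rightarrow> ('d, 'n) tensor) (\<alpha>::nat \<Rightarrow> real).
               (\<forall>l<r. best_rank_one_approx A (Y l) \<and> sym_rank_one_form (Y l)) \<and>
               (\<forall>l<r. \<alpha> l > 0) \<and> (\<Sum>l<r. \<alpha> l) = 1 \<and>
               (sn A / norm A)\<^sup>2 *\<^sub>R A = (\<Sum>l<r. \<alpha> l *\<^sub>R Y l)"
proof -
  define p where "p = A /\<^sub>R norm A"
  define K where "K = {v \<in> Tset. p \<bullet> v = sn p}"
  have "c *\<^sub>R A \<in> convex hull K" using clarke_subset crit unfolding K_def p_def by blast
  then obtain T u where fT: "finite T" and TK: "T \<subseteq> K" and u0: "\<forall>x\<in>T. 0 \<le> u x" and su: "sum u T = 1"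
    and cs: "(\<Sum>v\<in>T. u v *\<^sub>R v) = c *\<^sub>R A"
    unfolding convex_hull_explicit by blast
  define T' where "T' = {v \<in> T. u v \<noteq> 0}"
  have fT': "finite T'" using fT by (simp add: T'_def)
  have sub: "T' \<subseteq> T" by (auto simp: T'_def)
  have su': "sum u T' = 1" using su sum.mono_neutral_right[OF fT sub, of u] by (auto simp: T'_def)
  have cs': "(\<Sum>v\<in>T'. u v *\<^sub>R v) = c *\<^sub>R A"
    using cs sum.mono_neutral_right[OF fT sub, of "\<lambda>v. u v *\<^sub>R v"] by (auto simp: T'_def)
  have Kf: "A \<bullet> v = sn A" "best_rank_one_approx A (sn A *\<^sub>R v)" "sym_rank_one_form (sn A *\<^sub>R v)"
    if "v \<in> T'" for v
  proof -
    have "v \<in> Tset" "p \<bullet> v = sn p" using that sub TK by (auto simp: K_def)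
    then show "A \<bullet> v = sn A" "best_rank_one_approx A (sn A *\<^sub>R v)" "sym_rank_one_form (sn A *\<^sub>R v)"
      using K_facts[OF A0] unfolding p_def by blast+
  qed
  have upos: "0 < u v" if "v \<in> T'" for v using that u0 by (force simp: T'_def)
  have cval: "c * (norm A)^2 = sn A"
  proof -
    have "(c *\<^sub>R A) \<bullet> A = (\<Sum>v\<in>T'. u v * (v \<bullet> A))" unfolding cs'[symmetric] by (simp add: inner_sum_left)
    also have "\<dots> = (\<Sum>v\<in>T'. u v * sn A)" using Kf(1) by (intro sum.cong) (auto simp: inner_commute)
    also have "\<dots> = sn A" using su' by (simp add: sum_distrib_right[symmetric])
    finally show ?thesis by (simp add: power2_norm_eq_inner)
  qed
  obtain f where bf: "bij_betw f {0..<card T'} T'" using ex_bij_betw_nat_finite[OF fT'] by blast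
  define r where "r = card T'"
  have bf': "bij_betw f {..<r} T'" using bf by (simp add: r_def atLeast0LessThan)
  have fin: "f l \<in> T'" if "l < r" for l using bf' that by (auto simp: bij_betw_def)
  show ?thesis
  proof (intro exI[of _ r] exI[of _ "\<lambda>l. sn A *\<^sub>R f l"] exI[of _ "\<lambda>l. u (f l)"] conjI allI impI)
    fix l assume l: "l < r"
    show "best_rank_one_approx A (sn A *\<^sub>R f l)" by (rule Kf(2)[OF fin[OF l]])
    show "sym_rank_one_form (sn A *\<^sub>R f l)" by (rule Kf(3)[OF fin[OF l]])
    show "0 < u (f l)" by (rule upos[OF fin[OF l]])
  next
    show "(\<Sum>l<r. u (f l)) = 1" using sum.reindex_bij_betw[OF bf', of u] su' by simp
  next
    have "(\<Sum>l<r. u (f l) *\<^sub>R (sn A *\<^sub>R f l)) = sn A *\<^sub>R (\<Sum>l<r. u (f l) *\<^sub>R f l)"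
      by (simp add: scaleR_sum_right mult.commute)
    also have "(\<Sum>l<r. u (f l) *\<^sub>R f l) = (\<Sum>v\<in>T'. u v *\<^sub>R v)"
      by (rule sum.reindex_bij_betw[OF bf'])
    also have "sn A *\<^sub>R (\<Sum>v\<in>T'. u v *\<^sub>R v) = (sn A * c) *\<^sub>R A" by (simp add: cs')
    also have "sn A * c = (sn A / norm A)\<^sup>2"
    proof -
      have "c = sn A / (norm A)^2" using cval A0 by (simp add: field_simps)
      then show ?thesis by (simp add: power2_eq_square)
    qed
    finally show "(sn A / norm A)\<^sup>2 *\<^sub>R A = (\<Sum>l<r. u (f l) *\<^sub>R (sn A *\<^sub>R f l))" by simp
  qed
qed

theorem theorem1p9:
  fixes A :: "('d::finite, 'n::finite) tensor"
  assumes "A \<in> sym_tensors" and "A \<noteq> 0"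
  shows "(critical_in_sym A \<longleftrightarrow>
            (\<exists>(r::nat) (Y::nat \<Rightarrow> ('d, 'n) tensor) (\<alpha>::nat \<Rightarrow> real).
               (\<forall>l<r. best_rank_one_approx A (Y l) \<and> sym_rank_one_form (Y l)) \<and>
               (\<forall>l<r. \<alpha> l > 0) \<and> (\<Sum>l<r. \<alpha> l) = 1 \<and>
               (spectral_norm A / norm A)\<^sup>2 *\<^sub>R A = (\<Sum>l<r. \<alpha> l *\<^sub>R Y l)))
         \<and> (critical_in_sym A \<longrightarrow> critical_in_full A)"
proof -
  have fwd: "\<exists>(r::nat) (Y::nat \<Rightarrow> ('d, 'n) tensor) (\<alpha>::nat \<Rightarrow> real).
               (\<forall>l<r. best_rank_one_approx A (Y l) \<and> sym_rank_one_form (Y l)) \<and>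
               (\<forall>l<r. \<alpha> l > 0) \<and> (\<Sum>l<r. \<alpha> l) = 1 \<and>
               (spectral_norm A / norm A)\<^sup>2 *\<^sub>R A = (\<Sum>l<r. \<alpha> l *\<^sub>R Y l)"
    if crit: "critical_in_sym A"
  proof -
    obtain c where "c *\<^sub>R A \<in> clarke_grad sym_tensors sn (A /\<^sub>R norm A)"
      using crit unfolding critical_in_sym_def by blast
    then show ?thesis by (rule forward_dir[OF assms(2)])
  qed
  have bwd: "\<exists>c. c *\<^sub>R A \<in> clarke_grad S sn (A /\<^sub>R norm A)"
    if S: "subspace S" "A \<in> S" "\<And>Y c y. Y = c *\<^sub>R outer (\<lambda>_. y) \<Longrightarrow> Y \<in> S"
      and ex: "\<exists>(r::nat) (Y::nat \<Rightarrow> ('d, 'n) tensor) (\<alpha>::nat \<Rightarrow> real).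
               (\<forall>l<r. best_rank_one_approx A (Y l) \<and> sym_rank_one_form (Y l)) \<and>
               (\<forall>l<r. \<alpha> l > 0) \<and> (\<Sum>l<r. \<alpha> l) = 1 \<and>
               (spectral_norm A / norm A)\<^sup>2 *\<^sub>R A = (\<Sum>l<r. \<alpha> l *\<^sub>R Y l)" for S
  proof -
    obtain r :: nat and Y :: "nat \<Rightarrow> ('d, 'n) tensor" and \<alpha> :: "nat \<Rightarrow> real" where
      H: "\<forall>l<r. best_rank_one_approx A (Y l) \<and> sym_rank_one_form (Y l)"
         "\<forall>l<r. \<alpha> l > 0" "(\<Sum>l<r. \<alpha> l) = 1" "(sn A / norm A)\<^sup>2 *\<^sub>R A = (\<Sum>l<r. \<alpha> l *\<^sub>R Y l)"
      using ex by blast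
    have "\<forall>l<r. best_rank_one_approx A (Y l) \<and> Y l \<in> S"
      using H(1) S(3) unfolding sym_rank_one_form_def by blast
    then show ?thesis by (rule reverse_dir[OF S(1,2) assms(2) _ H(2,3,4)])
  qed
  show ?thesis
  proof (intro conjI iffI impI)
    assume "critical_in_sym A" then show "\<exists>(r::nat) (Y::nat \<Rightarrow> ('d, 'n) tensor) (\<alpha>::nat \<Rightarrow> real).
               (\<forall>l<r. best_rank_one_approx A (Y l) \<and> sym_rank_one_form (Y l)) \<and>
               (\<forall>l<r. \<alpha> l > 0) \<and> (\<Sum>l<r. \<alpha> l) = 1 \<and>
               (spectral_norm A / norm A)\<^sup>2 *\<^sub>R A = (\<Sum>l<r. \<alpha> l *\<^sub>R Y l)" by (rule fwd)
  next
    assume ex: "\<exists>(r::nat) (Y::nat \<Rightarrow> ('d, 'n) tensor) (\<alpha>::nat \<Rightarrow> real).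
               (\<forall>l<r. best_rank_one_approx A (Y l) \<and> sym_rank_one_form (Y l)) \<and>
               (\<forall>l<r. \<alpha> l > 0) \<and> (\<Sum>l<r. \<alpha> l) = 1 \<and>
               (spectral_norm A / norm A)\<^sup>2 *\<^sub>R A = (\<Sum>l<r. \<alpha> l *\<^sub>R Y l)"
    have "\<exists>c. c *\<^sub>R A \<in> clarke_grad sym_tensors sn (A /\<^sub>R norm A)"
      by (rule bwd[OF sym_subspace assms(1) _ ex]) (simp add: outer_sym)
    then show "critical_in_sym A" using assms unfolding critical_in_sym_def by blast
  next
    assume "critical_in_sym A"
    then have ex: "\<exists>(r::nat) (Y::nat \<Rightarrow> ('d, 'n) tensor) (\<alpha>::nat \<Rightarrow> real).
               (\<forall>l<r. best_rank_one_approx A (Y l) \<and> sym_rank_one_form (Y l)) \<and>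
               (\<forall>l<r. \<alpha> l > 0) \<and> (\<Sum>l<r. \<alpha> l) = 1 \<and>
               (spectral_norm A / norm A)\<^sup>2 *\<^sub>R A = (\<Sum>l<r. \<alpha> l *\<^sub>R Y l)" by (rule fwd)
    have "\<exists>c. c *\<^sub>R A \<in> clarke_grad UNIV sn (A /\<^sub>R norm A)"
      by (rule bwd[OF subspace_UNIV _ _ ex]) simp_all
    then show "critical_in_full A" using assms unfolding critical_in_full_def by blast
  qed
qed


end
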